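(* Let $0<T<\infty$, $1<p<\infty$ and $c>0$, and set $f_j(\tau)=e^{-c2^{2j}\tau}$ for $j\in\mathbb Z$, $\tau\ge0$. There is a constant $C>0$ (independent of the functions $g_j$) such that for every sequence $(g_j)_{j\in\mathbb Z}$ of measurable functions on $(0,T)$, \[ \int_0^T\int_0^t\Big|\sum_{j=1}^\infty f_j(t-s)g_j(s)\Big|^p ds\,dt\le C\int_0^T\sum_{j=1}^\infty 2^{-2j}|g_j(s)|^p ds \] and \[ \int_0^T\int_0^t\Big|\sum_{j=-\infty}^\infty f_j(t-s)g_j(s)\Big|^p ds\,dt\le C\int_0^T\sum_{j=-\infty}^\infty 2^{-2j}|g_j(s)|^p ds. \] *)

theory Defs
  imports "HOL-Analysis.Analysis"
begin

definition heat_kernel_f :: "real \<Rightarrow> int \<Rightarrow> real \<Rightarrow> real" where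
  "heat_kernel_f c j \<tau> = exp (- c * (2::real) powi (2 * j) * \<tau>)"

end

theory Submission
  imports Defs
begin

lemma ennreal_infsum_cmult:
  fixes f :: "'a \<Rightarrow> ennreal"
  shows "(\<Sum>\<^sub>\<infinity>k\<in>A. c * f k) = c * infsum f A"
proof -
  have "(\<Sum>\<^sub>\<infinity>k\<in>A. c * f k) = (SUP F\<in>{F. finite F \<and> F\<subseteq>A}. sum (\<lambda>k. c * f k) F)"
    by (rule nonneg_infsum_complete) simp
  also have "\<dots> = (SUP F\<in>{F. finite F \<and> F\<subseteq>A}. c * sum f F)" by (simp add: sum_distrib_left)
  also have "\<dots> = c * (SUP F\<in>{F. finite F \<and> F\<subseteq>A}. sum f F)"
    by (simp add: SUP_mult_left_ennreal)
  also have "\<dots> = c * infsum f A" by (subst nonneg_infsum_complete) auto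
  finally show ?thesis .
qed
lemma ennreal_infsum_nat:
  fixes f :: "nat \<Rightarrow> ennreal" shows "(\<Sum>\<^sub>\<infinity>n. f n) = suminf f"
proof -
  have "f summable_on UNIV" by (rule nonneg_summable_on_complete) simp
  hence "(f has_sum (\<Sum>\<^sub>\<infinity>n. f n)) UNIV" by (rule has_sum_infsum)
  hence "f sums (\<Sum>\<^sub>\<infinity>n. f n)" by (rule has_sum_imp_sums)
  thus ?thesis by (simp add: sums_iff)
qed

lemma ennreal_infsum_int:
  fixes f :: "int \<Rightarrow> ennreal" shows "(\<Sum>\<^sub>\<infinity>k. f k) = (\<Sum>n. f (int_decode n))"
proof -
  have "bij_betw int_decode UNIV UNIV" using bij_int_decode by (simp add: bij_def)
  hence "(\<Sum>\<^sub>\<infinity>n\<in>UNIV. f (int_decode n)) = (\<Sum>\<^sub>\<infinity>k\<in>UNIV. f k)"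
    by (rule infsum_reindex_bij_betw)
  then show ?thesis by (simp add: ennreal_infsum_nat)
qed

lemma ennreal_infsum_pos:
  fixes h :: "int \<Rightarrow> ennreal"
  assumes "\<And>k. k \<le> 0 \<Longrightarrow> h k = 0"
  shows "(\<Sum>\<^sub>\<infinity>k. h k) = (\<Sum>n. h (int (Suc n)))"
proof -
  have "(\<Sum>\<^sub>\<infinity>k\<in>UNIV. h k) = (\<Sum>\<^sub>\<infinity>k\<in>range (\<lambda>n. int (Suc n)). h k)"
  proof (rule infsum_cong_neutral)
    fix x assume x: "x \<in> UNIV - range (\<lambda>n. int (Suc n))"
    have "x \<le> 0"
    proof (rule ccontr)
      assume "\<not> x \<le> 0"
      hence "x = int (Suc (nat x - 1))" by simp
      thus False using x by blast
    qed
    thus "h x = 0" by (rule assms)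
  qed auto
  also have "\<dots> = (\<Sum>\<^sub>\<infinity>n\<in>UNIV. h (int (Suc n)))"
    by (subst infsum_reindex) (auto simp: inj_on_def o_def)
  finally show ?thesis by (simp add: ennreal_infsum_nat)
qed
lemma abs_suminf_le_ennreal:
  fixes a :: "nat \<Rightarrow> real"
  shows "ennreal \<bar>suminf a\<bar> \<le> (\<Sum>n. ennreal \<bar>a n\<bar>)"
proof (cases "summable (\<lambda>n. \<bar>a n\<bar>)")
  case True
  have "ennreal \<bar>suminf a\<bar> \<le> ennreal (\<Sum>n. \<bar>a n\<bar>)"
    by (rule ennreal_leI) (rule summable_rabs[OF True])
  also have "\<dots> = (\<Sum>n. ennreal \<bar>a n\<bar>)"
    by (rule suminf_ennreal2[symmetric]) (use True in auto)
  finally show ?thesis .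
next
  case False
  have "(\<Sum>n. ennreal \<bar>a n\<bar>) = top"
    using summable_suminf_not_top[of "\<lambda>n. \<bar>a n\<bar>"] False by (metis abs_ge_zero)
  thus ?thesis by (simp only: top_greatest)
qed
lemma ennreal_infsum_real:
  fixes a :: "'a \<Rightarrow> real"
  assumes "a summable_on A" "\<And>k. k \<in> A \<Longrightarrow> a k \<ge> 0"
  shows "ennreal (infsum a A) = (\<Sum>\<^sub>\<infinity>k\<in>A. ennreal (a k))"
proof -
  have "ennreal (infsum a A) = (SUP F\<in>{F. finite F \<and> F \<subseteq> A}. (ennreal (sum a F)))"
    by (rule infsum_nonneg_is_SUPREMUM_ennreal) (use assms in auto)
  also have "\<dots> = (SUP F\<in>{F. finite F \<and> F \<subseteq> A}. sum (\<lambda>k. ennreal (a k)) F)"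
    using assms(2) by (intro SUP_cong refl) (auto simp: sum_ennreal subset_eq)
  also have "\<dots> = (\<Sum>\<^sub>\<infinity>k\<in>A. ennreal (a k))" by (subst nonneg_infsum_complete) auto
  finally show ?thesis .
qed

lemma abs_infsum_le_ennreal:
  fixes a :: "'a \<Rightarrow> real"
  shows "ennreal \<bar>infsum a UNIV\<bar> \<le> (\<Sum>\<^sub>\<infinity>k. ennreal \<bar>a k\<bar>)"
proof (cases "a summable_on UNIV")
  case True
  hence as: "(\<lambda>k. \<bar>a k\<bar>) summable_on UNIV"
    using summable_on_iff_abs_summable_on_real by auto
  have "\<bar>infsum a UNIV\<bar> \<le> infsum (\<lambda>k. \<bar>a k\<bar>) UNIV"
    using norm_infsum_bound[of a UNIV] as by simp
  moreover have "ennreal (infsum (\<lambda>k. \<bar>a k\<bar>) UNIV) = (\<Sum>\<^sub>\<infinity>k. ennreal \<bar>a k\<bar>)"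
    by (rule ennreal_infsum_real[OF as]) auto
  ultimately show ?thesis by (metis ennreal_leI)
next
  case False
  thus ?thesis by (simp add: infsum_not_exists)
qed


lemma jensen_pos:
  fixes \<phi> y :: "'a \<Rightarrow> real"
  assumes "finite F" "1 \<le> p" "\<And>i. i\<in>F \<Longrightarrow> \<phi> i \<ge> 0" "\<And>i. i\<in>F \<Longrightarrow> y i > 0"
  shows "(\<Sum>i\<in>F. \<phi> i * y i) powr p \<le> (\<Sum>i\<in>F. \<phi> i) powr (p-1) * (\<Sum>i\<in>F. \<phi> i * y i powr p)"
proof (cases "(\<Sum>i\<in>F. \<phi> i) = 0")
  case True
  hence "\<forall>i\<in>F. \<phi> i = 0" using sum_nonneg_eq_0_iff assms(1,3) by blast
  thus ?thesis by simp
next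
  case False
  define W where "W = (\<Sum>i\<in>F. \<phi> i)"
  have "W \<ge> 0" unfolding W_def by (rule sum_nonneg) (use assms in auto)
  with False have W: "W > 0" unfolding W_def by linarith
  have "F \<noteq> {}" using False by auto
  define S where "S = (\<Sum>i\<in>F. \<phi> i * y i)"
  define Q where "Q = (\<Sum>i\<in>F. \<phi> i * y i powr p)"
  have S0: "S \<ge> 0" unfolding S_def using assms by (intro sum_nonneg) (metis less_imp_le mult_nonneg_nonneg)
  have Q0: "Q \<ge> 0" unfolding Q_def using assms by (intro sum_nonneg) auto
  have sum1: "(\<Sum>i\<in>F. \<phi> i / W) = 1" using W by (simp add: W_def sum_divide_distrib[symmetric])
  have "(\<Sum>i\<in>F. (\<phi> i / W) *\<^sub>R y i) powr p \<le> (\<Sum>i\<in>F. (\<phi> i / W) * y i powr p)"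
    by (rule convex_on_sum[OF assms(1) \<open>F\<noteq>{}\<close> powr_convex[OF assms(2)] sum1])
       (use assms W in auto)
  moreover have "(\<Sum>i\<in>F. (\<phi> i / W) *\<^sub>R y i) = S / W"
    by (simp add: S_def sum_divide_distrib)
  moreover have "(\<Sum>i\<in>F. (\<phi> i / W) * y i powr p) = Q / W"
    by (simp add: Q_def sum_divide_distrib)
  ultimately have "(S / W) powr p \<le> Q / W" by simp
  hence "S powr p / W powr p \<le> Q / W" using S0 W by (simp add: powr_divide)
  hence "S powr p \<le> W powr p * (Q / W)" using W by (simp add: divide_le_eq mult.commute)
  also have "W powr p * (Q / W) = W powr (p - 1) * Q" using W by (simp add: powr_diff)
  finally show ?thesis by (simp add: S_def Q_def W_def)
qed

lemma jensen_nonneg: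
  fixes \<phi> y :: "'a \<Rightarrow> real"
  assumes "finite F" "1 \<le> p" "\<And>i. i\<in>F \<Longrightarrow> \<phi> i \<ge> 0" "\<And>i. i\<in>F \<Longrightarrow> y i \<ge> 0"
  shows "(\<Sum>i\<in>F. \<phi> i * y i) powr p \<le> (\<Sum>i\<in>F. \<phi> i) powr (p-1) * (\<Sum>i\<in>F. \<phi> i * y i powr p)"
proof -
  define G where "G = {i\<in>F. y i > 0}"
  have G: "finite G" "G \<subseteq> F" using assms(1) by (auto simp: G_def)
  have e1: "(\<Sum>i\<in>F. \<phi> i * y i) = (\<Sum>i\<in>G. \<phi> i * y i)"
    by (rule sum.mono_neutral_right[OF assms(1) G(2)]) (use assms(4) in \<open>force simp: G_def\<close>)
  have e2: "(\<Sum>i\<in>F. \<phi> i * y i powr p) = (\<Sum>i\<in>G. \<phi> i * y i powr p)"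
    by (rule sum.mono_neutral_right[OF assms(1) G(2)]) (use assms(4) in \<open>force simp: G_def\<close>)
  have "(\<Sum>i\<in>G. \<phi> i * y i) powr p \<le> (\<Sum>i\<in>G. \<phi> i) powr (p-1) * (\<Sum>i\<in>G. \<phi> i * y i powr p)"
    by (rule jensen_pos[OF G(1) assms(2)]) (use assms G in \<open>auto simp: G_def\<close>)
  also have "\<dots> \<le> (\<Sum>i\<in>F. \<phi> i) powr (p-1) * (\<Sum>i\<in>G. \<phi> i * y i powr p)"
  proof (rule mult_right_mono)
    show "(\<Sum>i\<in>G. \<phi> i) powr (p-1) \<le> (\<Sum>i\<in>F. \<phi> i) powr (p-1)"
      by (rule powr_mono2) (use assms G in \<open>auto intro!: sum_nonneg sum_mono2\<close>)
    show "0 \<le> (\<Sum>i\<in>G. \<phi> i * y i powr p)" using assms G by (intro sum_nonneg) auto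
  qed
  finally show ?thesis using e1 e2 by simp
qed

lemma pointwise_bound:
  fixes \<phi> y :: "'a \<Rightarrow> real"
  assumes p: "1 < p" and \<phi>0: "\<And>k. \<phi> k \<ge> 0" and y0: "\<And>k. y k \<ge> 0" and \<Phi>0: "\<Phi> \<ge> 0"
    and W: "W > 0" and sW: "(\<Sum>\<^sub>\<infinity>k. ennreal (\<phi> k)) \<le> ennreal W"
    and sP: "ennreal \<Phi> \<le> (\<Sum>\<^sub>\<infinity>k. ennreal (\<phi> k * y k))"
  shows "ennreal (\<Phi> powr p) \<le> ennreal (W powr (p-1)) * (\<Sum>\<^sub>\<infinity>k. ennreal (\<phi> k * y k powr p))"
proof (rule ccontr)
  define R where "R = ennreal (W powr (p-1)) * (\<Sum>\<^sub>\<infinity>k. ennreal (\<phi> k * y k powr p))"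
  assume "\<not> ennreal (\<Phi> powr p) \<le> ennreal (W powr (p-1)) * (\<Sum>\<^sub>\<infinity>k. ennreal (\<phi> k * y k powr p))"
  hence lt: "R < ennreal (\<Phi> powr p)" by (simp add: R_def not_le)
  have "R < top" using lt ennreal_less_top order.strict_trans by blast
  then obtain r where r: "R = ennreal r" "r \<ge> 0" by (auto simp: less_top_ennreal)
  hence rlt: "r < \<Phi> powr p" using lt by (simp add: ennreal_less_iff)
  define \<rho> where "\<rho> = r powr (1/p)"
  have \<rho>0: "\<rho> \<ge> 0" by (simp add: \<rho>_def)
  have \<rho>p: "\<rho> powr p = r" using r p by (simp add: \<rho>_def powr_powr)
  have "\<rho> < \<Phi>"
  proof (rule ccontr)
    assume "\<not> \<rho> < \<Phi>"
    hence "\<Phi> powr p \<le> \<rho> powr p" using \<Phi>0 p by (intro powr_mono2) auto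
    thus False using rlt \<rho>p by simp
  qed
  hence "ennreal \<rho> < (\<Sum>\<^sub>\<infinity>k. ennreal (\<phi> k * y k))"
    using sP \<rho>0 by (metis ennreal_less_iff less_le_trans \<Phi>0)
  also have "\<dots> = (SUP F\<in>{F. finite F \<and> F \<subseteq> UNIV}. sum (\<lambda>k. ennreal (\<phi> k * y k)) F)"
    by (rule nonneg_infsum_complete) simp
  finally obtain F where F: "finite F" "ennreal \<rho> < sum (\<lambda>k. ennreal (\<phi> k * y k)) F"
    by (auto simp: less_SUP_iff)
  have sF: "sum (\<lambda>k. ennreal (\<phi> k * y k)) F = ennreal (\<Sum>k\<in>F. \<phi> k * y k)"
    using \<phi>0 y0 by (intro sum_ennreal) auto
  have S: "\<rho> < (\<Sum>k\<in>F. \<phi> k * y k)" using F(2) sF \<rho>0 by (simp add: ennreal_less_iff)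
  have fin_le: "sum (\<lambda>k. f k) F \<le> (\<Sum>\<^sub>\<infinity>k. f k)" for f :: "'a \<Rightarrow> ennreal"
  proof -
    have "sum f F \<le> (SUP F\<in>{F. finite F \<and> F \<subseteq> UNIV}. sum f F)" by (rule SUP_upper) (use F in auto)
    thus ?thesis by (subst nonneg_infsum_complete) auto
  qed
  have "ennreal (\<Sum>k\<in>F. \<phi> k) = sum (\<lambda>k. ennreal (\<phi> k)) F" using \<phi>0 by (intro sum_ennreal[symmetric]) auto
  also have "\<dots> \<le> ennreal W" using fin_le sW order_trans by blast
  finally have WF: "(\<Sum>k\<in>F. \<phi> k) \<le> W" using W by (simp add: ennreal_le_iff)
  have Q0: "0 \<le> (\<Sum>k\<in>F. \<phi> k * y k powr p)" using \<phi>0 by (intro sum_nonneg) auto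
  have "r = \<rho> powr p" using \<rho>p by simp
  also have "\<dots> < (\<Sum>k\<in>F. \<phi> k * y k) powr p" using S \<rho>0 p by (intro powr_less_mono2) auto
  also have "\<dots> \<le> (\<Sum>k\<in>F. \<phi> k) powr (p-1) * (\<Sum>k\<in>F. \<phi> k * y k powr p)"
    by (rule jensen_nonneg[OF F(1)]) (use p \<phi>0 y0 in auto)
  also have "\<dots> \<le> W powr (p-1) * (\<Sum>k\<in>F. \<phi> k * y k powr p)"
    by (rule mult_right_mono[OF powr_mono2 Q0]) (use p WF \<phi>0 in \<open>auto intro: sum_nonneg\<close>)
  finally have lt2: "r < W powr (p-1) * (\<Sum>k\<in>F. \<phi> k * y k powr p)" .
  have "ennreal (W powr (p-1) * (\<Sum>k\<in>F. \<phi> k * y k powr p)) = ennreal (W powr (p-1)) * sum (\<lambda>k. ennreal (\<phi> k * y k powr p)) F"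
    using \<phi>0 Q0 by (subst ennreal_mult) (auto intro!: sum_ennreal[symmetric] arg_cong2[where f="(*)"])
  also have "\<dots> \<le> R" unfolding R_def by (rule mult_left_mono[OF fin_le]) simp
  finally have "W powr (p-1) * (\<Sum>k\<in>F. \<phi> k * y k powr p) \<le> r" using r by (auto simp add: ennreal_le_iff2)
  thus False using lt2 by simp
qed
definition psi :: "real \<Rightarrow> real \<Rightarrow> int \<Rightarrow> real \<Rightarrow> real" where
  "psi p c k \<tau> = 2 powr (2 * real_of_int k / p) * heat_kernel_f c k \<tau>"

lemma heat_eq: "heat_kernel_f c k \<tau> = exp (- c * 4 powr real_of_int k * \<tau>)"
proof -
  have "(2::real) powi (2 * k) = 2 powr real_of_int (2 * k)" using powr_real_of_int'[of 2 "2*k"] by simp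
  also have "\<dots> = (2 powr 2) powr real_of_int k" by (simp only: powr_powr of_int_mult of_int_numeral)
  also have "\<dots> = 4 powr real_of_int k" by simp
  finally show ?thesis by (simp add: heat_kernel_f_def)
qed

lemma four_powr_div: "(4::real) powr (real_of_int k / p) = 2 powr (2 * real_of_int k / p)"
proof -
  have "(4::real) powr (real_of_int k / p) = (2 powr 2) powr (real_of_int k / p)" by simp
  also have "\<dots> = 2 powr (2 * (real_of_int k / p))" by (rule powr_powr)
  also have "\<dots> = 2 powr (2 * real_of_int k / p)" by simp
  finally show ?thesis .
qed

lemma psi_eq: "psi p c k \<tau> = 4 powr (real_of_int k / p) * exp (- c * 4 powr real_of_int k * \<tau>)"
  by (simp add: psi_def heat_eq four_powr_div)

lemma psi_nonneg: "psi p c k \<tau> \<ge> 0" by (simp add: psi_eq)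

lemma psi_scale:
  "psi p c k (4 powr real_of_int m * \<tau>) = 4 powr (- real_of_int m / p) * psi p c (k + m) \<tau>"
proof -
  have "4 powr real_of_int k * (4 powr real_of_int m * \<tau>) = 4 powr real_of_int (k + m) * \<tau>"
    by (simp add: powr_add)
  moreover have "(4::real) powr (real_of_int k / p) = 4 powr (- real_of_int m / p) * 4 powr (real_of_int (k+m) / p)"
  proof -
    have "real_of_int k / p = - real_of_int m / p + real_of_int (k+m) / p"
      by (simp add: diff_divide_distrib[symmetric])
    thus ?thesis by (simp add: powr_add[symmetric])
  qed
  ultimately show ?thesis by (simp add: psi_eq mult.assoc)
qed

lemma ennreal_infsum_int_split:
  fixes f :: "int \<Rightarrow> ennreal"
  shows "(\<Sum>\<^sub>\<infinity>k. f k) = (\<Sum>n. f (int n)) + (\<Sum>n. f (- int (Suc n)))"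
proof -
  have U: "(UNIV::int set) = range int \<union> range (\<lambda>n. - int (Suc n))"
  proof safe
    fix x :: int assume "x \<notin> range (\<lambda>n. - int (Suc n))"
    hence "x \<ge> 0"
    proof (rule contrapos_np)
      assume "\<not> x \<ge> 0"
      hence "x = - int (Suc (nat (-x) - 1))" by simp
      thus "x \<in> range (\<lambda>n. - int (Suc n))" by blast
    qed
    thus "x \<in> range int" by (metis nonneg_int_cases rangeI)
  qed auto
  have "(\<Sum>\<^sub>\<infinity>k\<in>UNIV. f k) = (\<Sum>\<^sub>\<infinity>k\<in>range int. f k) + (\<Sum>\<^sub>\<infinity>k\<in>range (\<lambda>n. - int (Suc n)). f k)"
    by (subst U, rule infsum_Un_disjoint) (auto intro: nonneg_summable_on_complete)
  also have "(\<Sum>\<^sub>\<infinity>k\<in>range int. f k) = (\<Sum>\<^sub>\<infinity>n\<in>UNIV. f (int n))"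
    by (subst infsum_reindex) (auto simp: o_def)
  also have "(\<Sum>\<^sub>\<infinity>k\<in>range (\<lambda>n. - int (Suc n)). f k) = (\<Sum>\<^sub>\<infinity>n\<in>UNIV. f (- int (Suc n)))"
    by (subst infsum_reindex) (auto simp: o_def inj_on_def)
  finally show ?thesis by (simp add: ennreal_infsum_nat)
qed


lemma Ssum_scale:
  "(\<Sum>\<^sub>\<infinity>k. ennreal (psi p c k (4 powr real_of_int m * \<tau>))) =
     ennreal (4 powr (- real_of_int m / p)) * (\<Sum>\<^sub>\<infinity>k. ennreal (psi p c k \<tau>))"
proof -
  have "(\<Sum>\<^sub>\<infinity>k. ennreal (psi p c k (4 powr real_of_int m * \<tau>))) =
        (\<Sum>\<^sub>\<infinity>k. ennreal (4 powr (- real_of_int m / p)) * ennreal (psi p c (k+m) \<tau>))"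
    by (simp add: psi_scale ennreal_mult psi_nonneg)
  also have "\<dots> = ennreal (4 powr (- real_of_int m / p)) * (\<Sum>\<^sub>\<infinity>k. ennreal (psi p c (k+m) \<tau>))"
    by (rule ennreal_infsum_cmult)
  also have "(\<Sum>\<^sub>\<infinity>k. ennreal (psi p c (k+m) \<tau>)) = (\<Sum>\<^sub>\<infinity>k. ennreal (psi p c k \<tau>))"
  proof -
    have "bij_betw (\<lambda>k. k + m) UNIV UNIV" by (rule bij_betwI[where g="\<lambda>k. k - m"]) auto
    thus ?thesis by (rule infsum_reindex_bij_betw)
  qed
  finally show ?thesis .
qed

lemma Ssum_mono:
  assumes "0 < c" "0 \<le> \<sigma>" "\<sigma> \<le> \<sigma>'"
  shows "(\<Sum>\<^sub>\<infinity>k. ennreal (psi p c k \<sigma>')) \<le> (\<Sum>\<^sub>\<infinity>k. ennreal (psi p c k \<sigma>))"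
proof (rule infsum_mono)
  fix k :: int
  have "c * 4 powr real_of_int k * \<sigma> \<le> c * 4 powr real_of_int k * \<sigma>'"
    using assms by (intro mult_left_mono) auto
  hence "psi p c k \<sigma>' \<le> psi p c k \<sigma>" by (simp add: psi_eq)
  thus "ennreal (psi p c k \<sigma>') \<le> ennreal (psi p c k \<sigma>)" by (rule ennreal_leI)
qed (auto intro: nonneg_summable_on_complete)

lemma exp_bound: fixes x :: real assumes "x > 0" shows "exp (- x) \<le> 4 / x^2"
proof -
  have "x / 2 \<le> exp (x/2)" using exp_ge_add_one_self[of "x/2"] by linarith
  hence "(x/2)^2 \<le> exp (x/2) ^ 2" using assms by (intro power_mono) auto
  also have "exp (x/2) ^ 2 = exp x" by (simp add: power2_eq_square exp_add[symmetric])
  finally have le: "(x/2)^2 \<le> exp x" .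
  have "exp (- x) = 1 / exp x" by (simp add: exp_minus')
  also have "\<dots> \<le> 1 / (x/2)^2" using le assms by (intro divide_left_mono) auto
  also have "\<dots> = 4 / x^2" by (simp add: power_divide)
  finally show ?thesis .
qed

lemma psi_pos_bound:
  assumes p: "1 \<le> p" and c: "0 < c"
  shows "psi p c (int n) 1 \<le> (4 / c^2) * 4 powr (- real n / p)"
proof -
  define u where "u = (4::real) powr real n"
  have u: "u > 0" by (simp add: u_def)
  have u2: "u^2 = 4 powr (2 * real n)" by (simp add: u_def power2_eq_square powr_add[symmetric])
  have "psi p c (int n) 1 = 4 powr (real n / p) * exp (- (c * u))" by (simp add: psi_eq u_def)
  also have "\<dots> \<le> 4 powr (real n / p) * (4 / (c * u)^2)"
    using exp_bound[of "c*u"] c u by (intro mult_left_mono) auto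
  also have "\<dots> = (4 / c^2) * (4 powr (real n / p) / 4 powr (2 * real n))"
    by (simp add: u2[symmetric] power_mult_distrib)
  also have "4 powr (real n / p) / 4 powr (2 * real n) = 4 powr (real n / p - 2 * real n)"
    by (simp add: powr_diff)
  also have "(4 / c^2) * 4 powr (real n / p - 2 * real n) \<le> (4 / c^2) * 4 powr (- real n / p)"
  proof (rule mult_left_mono)
    show "4 powr (real n / p - 2 * real n) \<le> 4 powr (- real n / p)"
  proof -
    have "real n / p \<le> real n" using p by (simp add: divide_le_eq) (metis mult_left_mono mult.right_neutral of_nat_0_le_iff)
    hence "real n / p - 2 * real n \<le> - real n / p" by simp
    thus ?thesis by simp
  qed
  qed simp
  finally show ?thesis .
qed

lemma psi_neg_bound:
  assumes p: "0 < p" and c: "0 < c"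
  shows "psi p c (- int (Suc n)) 1 \<le> 4 powr (- real n / p)"
proof -
  have "psi p c (- int (Suc n)) 1 \<le> 4 powr (- real (Suc n) / p)"
    using c by (simp add: psi_eq mult_le_cancel_left1)
  also have "\<dots> \<le> 4 powr (- real n / p)"
  proof -
    have "- real (Suc n) / p \<le> - real n / p" by (rule divide_right_mono) (use p in auto)
    thus ?thesis by simp
  qed
  finally show ?thesis .
qed

lemma geom_powr:
  assumes p: "0 < p"
  shows "summable (\<lambda>n. (4::real) powr (- real n / p))"
    and "(\<lambda>n. (4::real) powr (- real n / p)) = (\<lambda>n. (4 powr (-1/p)) ^ n)"
proof -
  show eq: "(\<lambda>n. (4::real) powr (- real n / p)) = (\<lambda>n. (4 powr (-1/p)) ^ n)"
    by (rule ext) (simp add: powr_power)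
  have "(4::real) powr (-1/p) < 4 powr 0" using p by (intro powr_less_mono) auto
  hence "norm ((4::real) powr (-1/p)) < 1" by simp
  thus "summable (\<lambda>n. (4::real) powr (- real n / p))" unfolding eq by (rule summable_geometric)
qed

lemma Ssum1_fin:
  assumes p: "1 \<le> p" and c: "0 < c"
  shows "\<exists>s1\<ge>0. (\<Sum>\<^sub>\<infinity>k. ennreal (psi p c k 1)) \<le> ennreal s1"
proof -
  define G where "G = (\<Sum>n. (4::real) powr (- real n / p))"
  have p0: "0 < p" using p by simp
  have sG: "summable (\<lambda>n. (4::real) powr (- real n / p))" by (rule geom_powr(1)[OF p0])
  have G0: "G \<ge> 0" unfolding G_def by (rule suminf_nonneg[OF sG]) simp
  have "(\<Sum>\<^sub>\<infinity>k. ennreal (psi p c k 1)) = (\<Sum>n. ennreal (psi p c (int n) 1)) + (\<Sum>n. ennreal (psi p c (- int (Suc n)) 1))"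
    by (rule ennreal_infsum_int_split)
  also have "\<dots> \<le> (\<Sum>n. ennreal ((4 / c^2) * 4 powr (- real n / p))) + (\<Sum>n. ennreal (4 powr (- real n / p)))"
  proof (rule add_mono)
    show "(\<Sum>n. ennreal (psi p c (int n) 1)) \<le> (\<Sum>n. ennreal ((4 / c^2) * 4 powr (- real n / p)))"
      by (rule suminf_le[OF _ summableI summableI], rule ennreal_leI, rule psi_pos_bound[OF p c])
    have p0: "0 < p" using p by simp
    show "(\<Sum>n. ennreal (psi p c (- int (Suc n)) 1)) \<le> (\<Sum>n. ennreal (4 powr (- real n / p)))"
      by (rule suminf_le[OF _ summableI summableI], rule ennreal_leI, rule psi_neg_bound[OF p0 c])
  qed
  also have "(\<Sum>n. ennreal ((4 / c^2) * 4 powr (- real n / p))) = ennreal ((4 / c^2) * G)"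
  proof -
    have sm: "summable (\<lambda>n. (4 / c^2) * 4 powr (- real n / p))" by (rule summable_mult[OF sG])
    have "(\<Sum>n. ennreal ((4 / c^2) * 4 powr (- real n / p))) = ennreal (\<Sum>n. (4 / c^2) * 4 powr (- real n / p))"
      by (rule suminf_ennreal2[OF _ sm]) simp
    also have "(\<Sum>n. (4 / c^2) * 4 powr (- real n / p)) = (4 / c^2) * G"
      unfolding G_def by (rule suminf_mult[OF sG])
    finally show ?thesis .
  qed
  also have "(\<Sum>n. ennreal (4 powr (- real n / p))) = ennreal G"
    unfolding G_def by (rule suminf_ennreal2[OF _ sG]) simp
  also have "ennreal ((4 / c^2) * G) + ennreal G = ennreal ((4 / c^2) * G + G)"
    by (rule ennreal_plus[symmetric]) (use G0 in auto)
  finally have "(\<Sum>\<^sub>\<infinity>k. ennreal (psi p c k 1)) \<le> ennreal ((4 / c^2) * G + G)" .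
  moreover have "(4 / c^2) * G + G \<ge> 0" using G0 by simp
  ultimately show ?thesis by blast
qed

lemma Sbound:
  assumes p: "1 < p" and c: "0 < c"
  shows "\<exists>A>0. \<forall>\<tau>>0. (\<Sum>\<^sub>\<infinity>k. ennreal (psi p c k \<tau>)) \<le> ennreal (A * \<tau> powr (-1/p))"
proof -
  obtain s1 where s1: "s1 \<ge> 0" "(\<Sum>\<^sub>\<infinity>k. ennreal (psi p c k 1)) \<le> ennreal s1"
    using Ssum1_fin[of p c] p c by auto
  define A where "A = (s1 + 1) * 4 powr (1/p)"
  have A: "A > 0" using s1 by (simp add: A_def)
  have "(\<Sum>\<^sub>\<infinity>k. ennreal (psi p c k \<tau>)) \<le> ennreal (A * \<tau> powr (-1/p))" if \<tau>: "\<tau> > 0" for \<tau>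
  proof -
    define m where "m = \<lfloor>log 4 \<tau>\<rfloor>"
    define \<sigma> where "\<sigma> = \<tau> / 4 powr real_of_int m"
    have "real_of_int m \<le> log 4 \<tau>" by (simp add: m_def)
    hence "4 powr real_of_int m \<le> 4 powr (log 4 \<tau>)" by simp
    hence m1: "4 powr real_of_int m \<le> \<tau>" using \<tau> by simp
    have "log 4 \<tau> < real_of_int m + 1" by (simp add: m_def)
    hence "4 powr (log 4 \<tau>) < 4 powr (real_of_int m + 1)" by simp
    hence m2: "\<tau> < 4 powr (real_of_int m + 1)" using \<tau> by simp
    have \<sigma>1: "1 \<le> \<sigma>" using m1 by (simp add: \<sigma>_def)
    have \<tau>eq: "\<tau> = 4 powr real_of_int m * \<sigma>" by (simp add: \<sigma>_def)
    have "(\<Sum>\<^sub>\<infinity>k. ennreal (psi p c k \<tau>)) = ennreal (4 powr (- real_of_int m / p)) * (\<Sum>\<^sub>\<infinity>k. ennreal (psi p c k \<sigma>))"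
      by (subst \<tau>eq) (rule Ssum_scale)
    also have "\<dots> \<le> ennreal (4 powr (- real_of_int m / p)) * ennreal s1"
      using Ssum_mono[of c 1 \<sigma> p] c \<sigma>1 s1(2) by (intro mult_left_mono) auto
    also have "\<dots> = ennreal (4 powr (- real_of_int m / p) * s1)" using s1 by (simp add: ennreal_mult)
    also have "\<dots> \<le> ennreal (A * \<tau> powr (-1/p))"
    proof (rule ennreal_leI)
      have "(4 powr (real_of_int m + 1)) powr (-1/p) \<le> \<tau> powr (-1/p)"
        using m2 \<tau> p by (intro powr_mono2') auto
      moreover have "(4 powr (real_of_int m + 1)) powr (-1/p) = 4 powr (- real_of_int m / p) * 4 powr (-1/p)"
      proof -
        have "(real_of_int m + 1) * (-1/p) = - real_of_int m / p + -1/p" by (simp add: add_divide_distrib)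
        hence "(4 powr (real_of_int m + 1)) powr (-1/p) = (4::real) powr (- real_of_int m / p + -1/p)"
          by (simp only: powr_powr)
        thus ?thesis by (simp only: powr_add)
      qed
      ultimately have "4 powr (- real_of_int m / p) * 4 powr (-1/p) \<le> \<tau> powr (-1/p)" by simp
      hence "A * (4 powr (- real_of_int m / p) * 4 powr (-1/p)) \<le> A * \<tau> powr (-1/p)"
        using A by (intro mult_left_mono) auto
      moreover have "A * (4 powr (- real_of_int m / p) * 4 powr (-1/p)) = (s1 + 1) * 4 powr (- real_of_int m / p)"
      proof -
        have one: "(4::real) powr (1/p) * 4 powr (-1/p) = 1" by (simp add: powr_add[symmetric])
        have "A * (4 powr (- real_of_int m / p) * 4 powr (-1/p)) = (s1 + 1) * 4 powr (- real_of_int m / p) * (4 powr (1/p) * 4 powr (-1/p))"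
          by (simp only: A_def mult_ac)
        thus ?thesis by (simp only: one mult_1_right)
      qed
      moreover have "4 powr (- real_of_int m / p) * s1 \<le> (s1 + 1) * 4 powr (- real_of_int m / p)"
        by (simp add: distrib_right)
      ultimately show "4 powr (- real_of_int m / p) * s1 \<le> A * \<tau> powr (-1/p)" by linarith
    qed
    finally show ?thesis .
  qed
  thus ?thesis using A by blast
qed
lemma J_fin:
  assumes p: "1 < p" and c0: "0 < c"
  shows "(\<integral>\<^sup>+v. ennreal (v powr (1/p - 1) * exp (- c * v)) * indicator {0<..} v \<partial>lborel) < \<infinity>"
proof -
  define e where "e = 1/p - 1"
  have e: "-1 < e" "e < 0" using p by (auto simp: e_def)
  define fa where "fa = (\<lambda>v::real. if v \<in> {0..1} then v powr e else 0)"
  define fb where "fb = (\<lambda>v::real. if v \<in> {1..} then v powr (-2) else 0)"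
  have ma[measurable]: "fa \<in> borel_measurable borel" unfolding fa_def by measurable
  have mb[measurable]: "fb \<in> borel_measurable borel" unfolding fb_def by measurable
  have ia: "(fa has_integral (1 powr (e+1) / (e+1))) UNIV"
    unfolding fa_def has_integral_restrict_UNIV by (rule has_integral_powr_from_0) (use e in auto)
  have ib: "(fb has_integral (-(1 powr (-2+1)) / (-2+1))) UNIV"
    unfolding fb_def has_integral_restrict_UNIV by (rule has_integral_powr_to_inf) auto
  have Ia: "(\<integral>\<^sup>+v. ennreal (fa v) \<partial>lborel) = ennreal (1 powr (e+1) / (e+1))"
    by (rule nn_integral_has_integral_lborel[OF ma _ ia]) (simp add: fa_def)
  have Ib: "(\<integral>\<^sup>+v. ennreal (fb v) \<partial>lborel) = ennreal (-(1 powr (-2+1)) / (-2+1))"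
    by (rule nn_integral_has_integral_lborel[OF mb _ ib]) (simp add: fb_def)
  have pw: "ennreal (v powr e * exp (- c * v)) * indicator {0<..} v \<le> ennreal (fa v) + ennreal ((4 / c^2) * fb v)" for v :: real
  proof (cases "v > 0")
    case False thus ?thesis by simp
  next
    case True
    hence v0: "v > 0" .
    show ?thesis
    proof (cases "v \<le> 1")
      case True
      hence True2: "v \<le> 1" .
      have "v powr e * exp (- c * v) \<le> v powr e * 1"
        using c0 v0 by (intro mult_left_mono) auto
      hence "ennreal (v powr e * exp (- c * v)) \<le> ennreal (fa v)"
        using v0 True2 by (intro ennreal_leI) (simp add: fa_def)
      thus ?thesis using v0 by (simp add: add_increasing2)
    next
      case False
      hence False2: "\<not> v \<le> 1" .
      have "v powr e \<le> v powr 0" using e False2 by (intro powr_mono) auto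
      hence pe: "v powr e \<le> 1" using v0 by simp
      have "exp (- (c * v)) \<le> 4 / (c * v)^2" using exp_bound[of "c * v"] c0 v0 by simp
      also have "\<dots> = (4 / c^2) * v powr (-2)"
        using v0 by (simp add: powr_minus power_mult_distrib divide_simps)
      finally have ex: "exp (- c * v) \<le> (4 / c^2) * v powr (-2)" by simp
      have "v powr e * exp (- c * v) \<le> 1 * ((4 / c^2) * v powr (-2))"
        using pe ex by (intro mult_mono) auto
      hence "ennreal (v powr e * exp (- c * v)) \<le> ennreal ((4 / c^2) * fb v)"
        using v0 False2 by (intro ennreal_leI) (simp add: fb_def)
      thus ?thesis using v0 by (simp add: add_increasing)
    qed
  qed
  have "(\<integral>\<^sup>+v. ennreal (v powr (1/p - 1) * exp (- c * v)) * indicator {0<..} v \<partial>lborel)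
      \<le> (\<integral>\<^sup>+v. ennreal (fa v) + ennreal ((4 / c^2) * fb v) \<partial>lborel)"
    by (rule nn_integral_mono) (use pw in \<open>simp add: e_def\<close>)
  also have "\<dots> = (\<integral>\<^sup>+v. ennreal (fa v) \<partial>lborel) + (\<integral>\<^sup>+v. ennreal (4 / c^2) * ennreal (fb v) \<partial>lborel)"
  proof -
    have em: "ennreal ((4 / c^2) * fb v) = ennreal (4 / c^2) * ennreal (fb v)" for v
      by (rule ennreal_mult) (auto simp: fb_def)
    show ?thesis unfolding em by (rule nn_integral_add) auto
  qed
  also have "\<dots> = ennreal (1 powr (e+1) / (e+1)) + ennreal (4 / c^2) * ennreal (-(1 powr (-2+1)) / (-2+1))"
    by (subst nn_integral_cmult) (auto simp: Ia Ib)
  also have "\<dots> < \<infinity>" by (simp add: ennreal_mult_less_top)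
  finally show ?thesis .
qed

lemma int_bound:
  assumes p: "1 < p" and c0: "0 < c" and A0: "0 < A"
  shows "\<exists>K\<ge>0. \<forall>k s. (\<integral>\<^sup>+t. ennreal ((A * (t - s) powr (-1/p)) powr (p-1) * psi p c k (t - s))
                     * indicator {s<..<T} t \<partial>lborel) \<le> ennreal K"
proof -
  define e where "e = 1/p - 1"
  define H where "H = (\<lambda>v::real. ennreal (v powr e * exp (- c * v)) * indicator {0<..} v)"
  have "integral\<^sup>N lborel H < \<infinity>" unfolding H_def e_def by (rule J_fin[OF p c0])
  then obtain J where J: "J \<ge> 0" "integral\<^sup>N lborel H = ennreal J" by (auto simp: less_top_ennreal)
  define K where "K = A powr (p-1) * J"
  have K0: "K \<ge> 0" using J by (simp add: K_def)
  have "(\<integral>\<^sup>+t. ennreal ((A * (t - s) powr (-1/p)) powr (p-1) * psi p c k (t - s))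
                     * indicator {s<..<T} t \<partial>lborel) \<le> ennreal K" for k s
  proof -
    define u where "u = (4::real) powr real_of_int k"
    have u0: "u > 0" by (simp add: u_def)
    define G where "G = (\<lambda>x::real. ennreal (x powr e * (4 powr (real_of_int k / p) * exp (- c * u * x))) * indicator {0<..} x)"
    have mG[measurable]: "G \<in> borel_measurable borel" unfolding G_def by measurable
    have step1: "ennreal ((A * (t - s) powr (-1/p)) powr (p-1) * psi p c k (t - s)) * indicator {s<..<T} t
           \<le> ennreal (A powr (p-1)) * G (t - s)" for t
    proof (cases "t \<in> {s<..<T}")
      case False thus ?thesis by simp
    next
      case True
      hence x0: "t - s > 0" by simp
      have "(A * (t - s) powr (-1/p)) powr (p-1) = A powr (p-1) * (t - s) powr e"
        using A0 x0 p by (simp add: powr_mult powr_powr e_def algebra_simps diff_divide_distrib)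
      moreover have "psi p c k (t - s) = 4 powr (real_of_int k / p) * exp (- c * u * (t - s))"
        by (simp add: psi_eq u_def)
      ultimately have "ennreal ((A * (t - s) powr (-1/p)) powr (p-1) * psi p c k (t - s))
          = ennreal (A powr (p-1)) * ennreal ((t - s) powr e * (4 powr (real_of_int k / p) * exp (- c * u * (t - s))))"
        by (simp add: ennreal_mult[symmetric] mult.assoc)
      thus ?thesis using True x0 by (simp add: G_def)
    qed
    have "(\<integral>\<^sup>+t. ennreal ((A * (t - s) powr (-1/p)) powr (p-1) * psi p c k (t - s))
                     * indicator {s<..<T} t \<partial>lborel) \<le> (\<integral>\<^sup>+t. ennreal (A powr (p-1)) * G (t - s) \<partial>lborel)"
      by (rule nn_integral_mono) (rule step1)
    also have "\<dots> = ennreal (A powr (p-1)) * (\<integral>\<^sup>+t. G (t - s) \<partial>lborel)"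
      by (rule nn_integral_cmult) measurable
    also have "(\<integral>\<^sup>+t. G (t - s) \<partial>lborel) = (\<integral>\<^sup>+x. G x \<partial>lborel)"
      using nn_integral_real_affine[of "\<lambda>t. G (t - s)" 1 s] by simp
    also have "(\<integral>\<^sup>+x. G x \<partial>lborel) = ennreal (1/u) * (\<integral>\<^sup>+v. G (0 + (1/u) * v) \<partial>lborel)"
      using nn_integral_real_affine[OF mG, of "1/u" 0] u0 by simp
    also have "\<dots> = (\<integral>\<^sup>+v. ennreal (1/u) * G ((1/u) * v) \<partial>lborel)"
    proof -
      have m: "(\<lambda>v. G (1/u * v)) \<in> borel_measurable lborel"
        by (rule measurable_compose[OF _ mG]) simp
      show ?thesis using nn_integral_cmult[OF m, of "ennreal (1/u)"] by simp
    qed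
    also have "\<dots> = integral\<^sup>N lborel H"
    proof (rule nn_integral_cong)
      fix v :: real
      show "ennreal (1/u) * G ((1/u) * v) = H v"
      proof (cases "v > 0")
        case False
        hence "\<not> 0 < v / u" using u0 by (simp add: zero_less_divide_iff)
        thus ?thesis using False u0 by (simp add: G_def H_def)
      next
        case True
        have "(v / u) powr e = v powr e * u powr (-e)" using True u0 by (simp add: powr_divide powr_minus_divide)
        moreover have "(4::real) powr (real_of_int k / p) = u powr (1/p)" by (simp add: u_def powr_powr)
        moreover have "u powr (-e) * u powr (1/p) = u" using u0 by (simp add: powr_add[symmetric] e_def)
        moreover have "- c * u * (v / u) = - c * v" using u0 by simp
        ultimately have "(1/u) * ((v/u) powr e * (4 powr (real_of_int k / p) * exp (- c * u * (v/u)))) = v powr e * exp (- c * v)"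
          using u0 by (simp add: field_simps)
        thus ?thesis using True u0 by (simp add: G_def H_def ennreal_mult[symmetric])
      qed
    qed
    also have "\<dots> = ennreal J" by (rule J(2))
    finally show ?thesis using J by (simp add: K_def ennreal_mult powr_nonneg_iff)
  qed
  thus ?thesis using K0 by blast
qed
lemma main_bound:
  assumes T: "0 < T" and p: "1 < p" and c0: "0 < c"
  shows "\<exists>C>0. \<forall>(g :: int \<Rightarrow> real \<Rightarrow> real) (\<Phi> :: real \<Rightarrow> real \<Rightarrow> real).
     (\<forall>j. set_borel_measurable lborel {0<..<T} (g j)) \<longrightarrow> (\<forall>t s. \<Phi> t s \<ge> 0) \<longrightarrow>
     (\<forall>t s. 0 < s \<longrightarrow> s < t \<longrightarrow> t < T \<longrightarrow>
        ennreal (\<Phi> t s) \<le> (\<Sum>\<^sub>\<infinity>k. ennreal (heat_kernel_f c k (t - s) * \<bar>g k s\<bar>))) \<longrightarrow>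
     (\<integral>\<^sup>+ t. (\<integral>\<^sup>+ s. ennreal (\<Phi> t s powr p) * indicator {0<..<t} s \<partial>lborel) * indicator {0<..<T} t \<partial>lborel)
       \<le> ennreal C * (\<integral>\<^sup>+ s. (\<Sum>\<^sub>\<infinity>j\<in>(UNIV::int set). ennreal ((2::real) powi (- 2 * j) * \<bar>g j s\<bar> powr p))
                 * indicator {0<..<T} s \<partial>lborel)"
proof -
  obtain A where A0: "A > 0" and SA: "\<And>\<tau>. \<tau> > 0 \<Longrightarrow> (\<Sum>\<^sub>\<infinity>k. ennreal (psi p c k \<tau>)) \<le> ennreal (A * \<tau> powr (-1/p))"
    using Sbound[OF p c0] by blast
  obtain K where K0: "K \<ge> 0" and IK: "\<And>k s. (\<integral>\<^sup>+t. ennreal ((A * (t - s) powr (-1/p)) powr (p-1) * psi p c k (t - s))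
                     * indicator {s<..<T} t \<partial>lborel) \<le> ennreal K"
    using int_bound[OF p c0 A0, of T] by blast
  define C where "C = K + 1"
  have C0: "C > 0" using K0 by (simp add: C_def)
  have main: "(\<integral>\<^sup>+ t. (\<integral>\<^sup>+ s. ennreal (\<Phi> t s powr p) * indicator {0<..<t} s \<partial>lborel) * indicator {0<..<T} t \<partial>lborel)
       \<le> ennreal C * (\<integral>\<^sup>+ s. (\<Sum>\<^sub>\<infinity>j\<in>(UNIV::int set). ennreal ((2::real) powi (- 2 * j) * \<bar>g j s\<bar> powr p))
                 * indicator {0<..<T} s \<partial>lborel)"
    if gm: "\<forall>j. set_borel_measurable lborel {0<..<T} (g j)" and \<Phi>0: "\<forall>t s. \<Phi> t s \<ge> 0"
      and \<Phi>b: "\<forall>t s. 0 < s \<longrightarrow> s < t \<longrightarrow> t < T \<longrightarrow>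
        ennreal (\<Phi> t s) \<le> (\<Sum>\<^sub>\<infinity>k. ennreal (heat_kernel_f c k (t - s) * \<bar>g k s\<bar>))"
    for g :: "int \<Rightarrow> real \<Rightarrow> real" and \<Phi> :: "real \<Rightarrow> real \<Rightarrow> real"
  proof -
    define gt where "gt = (\<lambda>j s. indicator {0<..<T} s *\<^sub>R g j s)"
    have gtm[measurable]: "gt j \<in> borel_measurable borel" for j
      using gm unfolding gt_def set_borel_measurable_def by simp
    have gt_eq: "s \<in> {0<..<T} \<Longrightarrow> gt j s = g j s" for j s by (simp add: gt_def)
    define Gk where "Gk = (\<lambda>j s. (2::real) powi (- 2 * j) * \<bar>gt j s\<bar> powr p)"
    have Gk0: "Gk j s \<ge> 0" for j s by (simp add: Gk_def)
    have Gkm[measurable]: "(\<lambda>s. Gk j s) \<in> borel_measurable borel" for j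
      unfolding Gk_def by measurable
    define Ker where "Ker = (\<lambda>j \<tau>. (A * \<tau> powr (-1/p)) powr (p-1) * psi p c j \<tau>)"
    have Ker0: "Ker j \<tau> \<ge> 0" for j \<tau> by (simp add: Ker_def psi_nonneg)
    have Kerm[measurable]: "(\<lambda>\<tau>. Ker j \<tau>) \<in> borel_measurable borel" for j
      unfolding Ker_def psi_eq by measurable
    define ind2 where "ind2 = (\<lambda>t s::real. if 0 < s \<and> s < t \<and> t < T then 1 else (0::ennreal))"
    have ind2m[measurable]: "(\<lambda>x. ind2 (fst x) (snd x)) \<in> borel_measurable (lborel \<Otimes>\<^sub>M lborel)"
      unfolding ind2_def by measurable
    define F where "F = (\<lambda>n t s. ennreal (Gk (int_decode n) s) * ennreal (Ker (int_decode n) (t - s)) * ind2 t s)"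
    have Fm: "(\<lambda>x. F n (fst x) (snd x)) \<in> borel_measurable (lborel \<Otimes>\<^sub>M lborel)" for n
      unfolding F_def by measurable
    define e where "e = int_decode"
    have pw: "ennreal (\<Phi> t s powr p) \<le> (\<Sum>n. F n t s)" if st: "0 < s" "s < t" "t < T" for t s
    proof -
      define \<tau> where "\<tau> = t - s"
      have \<tau>0: "\<tau> > 0" using st by (simp add: \<tau>_def)
      have sT: "s \<in> {0<..<T}" using st by simp
      define y where "y = (\<lambda>k. 2 powr (- 2 * real_of_int k / p) * \<bar>g k s\<bar>)"
      have y0: "y k \<ge> 0" for k by (simp add: y_def)
      have py: "psi p c k \<tau> * y k = heat_kernel_f c k \<tau> * \<bar>g k s\<bar>" for k
      proof -
        have "(2::real) powr (2 * real_of_int k / p) * 2 powr (- 2 * real_of_int k / p) = 1"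
          by (simp add: powr_add[symmetric])
        thus ?thesis by (simp add: psi_def y_def)
      qed
      have pyp: "psi p c k \<tau> * y k powr p = psi p c k \<tau> * Gk k s" for k
      proof -
        have "y k powr p = (2 powr (- 2 * real_of_int k / p)) powr p * \<bar>g k s\<bar> powr p"
          by (simp add: y_def powr_mult)
        also have "(2 powr (- 2 * real_of_int k / p)) powr p = (2::real) powr (real_of_int (- 2 * k))"
          using p by (simp add: powr_powr)
        also have "\<dots> = 2 powi (- 2 * k)" by (rule powr_real_of_int') auto
        finally show ?thesis using gt_eq[OF sT] by (simp add: Gk_def)
      qed
      have "ennreal (\<Phi> t s powr p) \<le> ennreal ((A * \<tau> powr (-1/p)) powr (p-1)) * (\<Sum>\<^sub>\<infinity>k. ennreal (psi p c k \<tau> * y k powr p))"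
      proof (rule pointwise_bound[OF p psi_nonneg y0])
        show "0 \<le> \<Phi> t s" using \<Phi>0 by simp
        show "0 < A * \<tau> powr (-1/p)" using A0 \<tau>0 by simp
        show "(\<Sum>\<^sub>\<infinity>k. ennreal (psi p c k \<tau>)) \<le> ennreal (A * \<tau> powr (-1/p))" by (rule SA[OF \<tau>0])
        show "ennreal (\<Phi> t s) \<le> (\<Sum>\<^sub>\<infinity>k. ennreal (psi p c k \<tau> * y k))"
        proof -
          have "(\<Sum>\<^sub>\<infinity>k. ennreal (psi p c k \<tau> * y k)) = (\<Sum>\<^sub>\<infinity>k. ennreal (heat_kernel_f c k \<tau> * \<bar>g k s\<bar>))"
            by (simp only: py)
          thus ?thesis using \<Phi>b st by (simp add: \<tau>_def)
        qed
      qed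
      also have "\<dots> = (\<Sum>\<^sub>\<infinity>k. ennreal ((A * \<tau> powr (-1/p)) powr (p-1)) * ennreal (psi p c k \<tau> * Gk k s))"
        unfolding pyp by (rule ennreal_infsum_cmult[symmetric])
      also have "\<dots> = (\<Sum>\<^sub>\<infinity>k. ennreal (Gk k s) * ennreal (Ker k \<tau>))"
        by (rule infsum_cong) (simp add: Ker_def ennreal_mult[symmetric] psi_nonneg Gk0 mult_ac)
      also have "\<dots> = (\<Sum>n. ennreal (Gk (e n) s) * ennreal (Ker (e n) \<tau>))"
        unfolding e_def by (rule ennreal_infsum_int)
      also have "\<dots> = (\<Sum>n. F n t s)"
        using st by (simp add: F_def ind2_def e_def \<tau>_def)
      finally show ?thesis .
    qed
    have Fmt[measurable]: "(\<lambda>s. F n t s) \<in> borel_measurable lborel" for n t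
      unfolding F_def ind2_def by measurable
    have Fm2: "(\<lambda>(t, s). F n t s) \<in> borel_measurable (lborel \<Otimes>\<^sub>M lborel)" for n
      using Fm[of n] by (simp add: split_beta')
    have Fm3: "(\<lambda>(s, t). F n t s) \<in> borel_measurable (lborel \<Otimes>\<^sub>M lborel)" for n
      unfolding F_def ind2_def by measurable
    have step1: "(\<integral>\<^sup>+ t. (\<integral>\<^sup>+ s. ennreal (\<Phi> t s powr p) * indicator {0<..<t} s \<partial>lborel) * indicator {0<..<T} t \<partial>lborel)
        \<le> (\<integral>\<^sup>+ t. (\<integral>\<^sup>+ s. (\<Sum>n. F n t s) \<partial>lborel) \<partial>lborel)"
    proof (rule nn_integral_mono)
      fix t :: real
      show "(\<integral>\<^sup>+ s. ennreal (\<Phi> t s powr p) * indicator {0<..<t} s \<partial>lborel) * indicator {0<..<T} t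
            \<le> (\<integral>\<^sup>+ s. (\<Sum>n. F n t s) \<partial>lborel)"
      proof (cases "t \<in> {0<..<T}")
        case False thus ?thesis by simp
      next
        case True
        have "(\<integral>\<^sup>+ s. ennreal (\<Phi> t s powr p) * indicator {0<..<t} s \<partial>lborel) \<le> (\<integral>\<^sup>+ s. (\<Sum>n. F n t s) \<partial>lborel)"
        proof (rule nn_integral_mono)
          fix s :: real
          show "ennreal (\<Phi> t s powr p) * indicator {0<..<t} s \<le> (\<Sum>n. F n t s)"
          proof (cases "s \<in> {0<..<t}")
            case False thus ?thesis by simp
          next
            case True2: True
            thus ?thesis using pw[of s t] True by simp
          qed
        qed
        thus ?thesis using True by simp
      qed
    qed
    also have "\<dots> = (\<integral>\<^sup>+ t. (\<Sum>n. \<integral>\<^sup>+ s. F n t s \<partial>lborel) \<partial>lborel)"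
      by (rule nn_integral_cong) (rule nn_integral_suminf, rule Fmt)
    also have "\<dots> = (\<Sum>n. \<integral>\<^sup>+ t. (\<integral>\<^sup>+ s. F n t s \<partial>lborel) \<partial>lborel)"
      by (rule nn_integral_suminf) (rule lborel.borel_measurable_nn_integral[OF Fm2])
    also have "\<dots> = (\<Sum>n. \<integral>\<^sup>+ s. (\<integral>\<^sup>+ t. F n t s \<partial>lborel) \<partial>lborel)"
      by (rule suminf_cong) (rule lborel_pair.Fubini'[OF Fm3])
    also have "\<dots> \<le> (\<Sum>n. \<integral>\<^sup>+ s. ennreal (Gk (e n) s) * indicator {0<..<T} s * ennreal K \<partial>lborel)"
    proof (rule suminf_le[OF _ summableI summableI], rule nn_integral_mono)
      fix n s
      have eqF: "F n t s = (ennreal (Gk (e n) s) * indicator {0<..<T} s) *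
                   (ennreal (Ker (e n) (t - s)) * indicator {s<..<T} t)" for t
        by (auto simp: F_def ind2_def e_def indicator_def)
      have "(\<integral>\<^sup>+ t. F n t s \<partial>lborel) = (ennreal (Gk (e n) s) * indicator {0<..<T} s) *
               (\<integral>\<^sup>+ t. ennreal (Ker (e n) (t - s)) * indicator {s<..<T} t \<partial>lborel)"
        unfolding eqF by (rule nn_integral_cmult) measurable
      also have "\<dots> \<le> (ennreal (Gk (e n) s) * indicator {0<..<T} s) * ennreal K"
        by (rule mult_left_mono) (use IK[where k="e n" and s=s] in \<open>simp_all add: Ker_def\<close>)
      finally show "(\<integral>\<^sup>+ t. F n t s \<partial>lborel) \<le> ennreal (Gk (e n) s) * indicator {0<..<T} s * ennreal K" .
    qed
    also have "\<dots> = (\<Sum>n. (\<integral>\<^sup>+ s. ennreal (Gk (e n) s) * indicator {0<..<T} s \<partial>lborel) * ennreal K)"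
      by (rule suminf_cong, rule nn_integral_multc) measurable
    also have "\<dots> = (\<Sum>n. (\<integral>\<^sup>+ s. ennreal (Gk (e n) s) * indicator {0<..<T} s \<partial>lborel)) * ennreal K"
      by (rule ennreal_suminf_multc)
    also have "(\<Sum>n. (\<integral>\<^sup>+ s. ennreal (Gk (e n) s) * indicator {0<..<T} s \<partial>lborel))
        = (\<integral>\<^sup>+ s. (\<Sum>n. ennreal (Gk (e n) s) * indicator {0<..<T} s) \<partial>lborel)"
      by (rule nn_integral_suminf[symmetric]) measurable
    also have "\<dots> = (\<integral>\<^sup>+ s. (\<Sum>\<^sub>\<infinity>j\<in>(UNIV::int set). ennreal ((2::real) powi (- 2 * j) * \<bar>g j s\<bar> powr p))
                 * indicator {0<..<T} s \<partial>lborel)"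
    proof (rule nn_integral_cong)
      fix s :: real
      show "(\<Sum>n. ennreal (Gk (e n) s) * indicator {0<..<T} s) =
            (\<Sum>\<^sub>\<infinity>j\<in>(UNIV::int set). ennreal ((2::real) powi (- 2 * j) * \<bar>g j s\<bar> powr p)) * indicator {0<..<T} s"
      proof (cases "s \<in> {0<..<T}")
        case False thus ?thesis by simp
      next
        case True
        have "(\<Sum>n. ennreal (Gk (e n) s)) = (\<Sum>\<^sub>\<infinity>j. ennreal (Gk j s))"
          unfolding e_def by (rule ennreal_infsum_int[symmetric])
        also have "\<dots> = (\<Sum>\<^sub>\<infinity>j\<in>(UNIV::int set). ennreal ((2::real) powi (- 2 * j) * \<bar>g j s\<bar> powr p))"
          using gt_eq[OF True] by (simp add: Gk_def)
        finally show ?thesis using True by simp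
      qed
    qed
    finally have fin: "(\<integral>\<^sup>+ t. (\<integral>\<^sup>+ s. ennreal (\<Phi> t s powr p) * indicator {0<..<t} s \<partial>lborel) * indicator {0<..<T} t \<partial>lborel)
       \<le> (\<integral>\<^sup>+ s. (\<Sum>\<^sub>\<infinity>j\<in>(UNIV::int set). ennreal ((2::real) powi (- 2 * j) * \<bar>g j s\<bar> powr p))
                 * indicator {0<..<T} s \<partial>lborel) * ennreal K" .
    also have "\<dots> \<le> ennreal C * (\<integral>\<^sup>+ s. (\<Sum>\<^sub>\<infinity>j\<in>(UNIV::int set). ennreal ((2::real) powi (- 2 * j) * \<bar>g j s\<bar> powr p))
                 * indicator {0<..<T} s \<partial>lborel)"
      by (subst mult.commute, rule mult_right_mono) (auto simp: C_def intro!: ennreal_leI)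
    finally show ?thesis .
  qed
  show ?thesis using C0 main by blast
qed
lemma heat_nonneg: "heat_kernel_f c k \<tau> \<ge> 0" by (simp add: heat_kernel_f_def)

theorem lemma5p1:
  fixes T p c :: real
  assumes "0 < T" and "1 < p" and "0 < c"
  shows "\<exists>C::real. C > 0 \<and>
    (\<forall>g :: int \<Rightarrow> real \<Rightarrow> real.
       (\<forall>j. set_borel_measurable lborel {0<..<T} (g j)) \<longrightarrow>
       ((\<integral>\<^sup>+ t. (\<integral>\<^sup>+ s. ennreal (\<bar>\<Sum>j. heat_kernel_f c (int (Suc j)) (t - s) * g (int (Suc j)) s\<bar> powr p)
                 * indicator {0<..<t} s \<partial>lborel) * indicator {0<..<T} t \<partial>lborel)
         \<le> ennreal C * (\<integral>\<^sup>+ s. (\<Sum>j. ennreal ((2::real) powi (- 2 * int (Suc j)) * \<bar>g (int (Suc j)) s\<bar> powr p))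
                 * indicator {0<..<T} s \<partial>lborel)
        \<and>
        (\<integral>\<^sup>+ t. (\<integral>\<^sup>+ s. ennreal (\<bar>\<Sum>\<^sub>\<infinity>j\<in>(UNIV::int set). heat_kernel_f c j (t - s) * g j s\<bar> powr p)
                 * indicator {0<..<t} s \<partial>lborel) * indicator {0<..<T} t \<partial>lborel)
         \<le> ennreal C * (\<integral>\<^sup>+ s. (\<Sum>\<^sub>\<infinity>j\<in>(UNIV::int set). ennreal ((2::real) powi (- 2 * j) * \<bar>g j s\<bar> powr p))
                 * indicator {0<..<T} s \<partial>lborel)))"
proof -
  obtain C where C0: "C > 0" and MB: "\<And>(g :: int \<Rightarrow> real \<Rightarrow> real) (\<Phi> :: real \<Rightarrow> real \<Rightarrow> real).
     (\<forall>j. set_borel_measurable lborel {0<..<T} (g j)) \<Longrightarrow> (\<forall>t s. \<Phi> t s \<ge> 0) \<Longrightarrow>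
     (\<forall>t s. 0 < s \<longrightarrow> s < t \<longrightarrow> t < T \<longrightarrow>
        ennreal (\<Phi> t s) \<le> (\<Sum>\<^sub>\<infinity>k. ennreal (heat_kernel_f c k (t - s) * \<bar>g k s\<bar>))) \<Longrightarrow>
     (\<integral>\<^sup>+ t. (\<integral>\<^sup>+ s. ennreal (\<Phi> t s powr p) * indicator {0<..<t} s \<partial>lborel) * indicator {0<..<T} t \<partial>lborel)
       \<le> ennreal C * (\<integral>\<^sup>+ s. (\<Sum>\<^sub>\<infinity>j\<in>(UNIV::int set). ennreal ((2::real) powi (- 2 * j) * \<bar>g j s\<bar> powr p))
                 * indicator {0<..<T} s \<partial>lborel)"
    using main_bound[OF assms] by blast
  have "(\<integral>\<^sup>+ t. (\<integral>\<^sup>+ s. ennreal (\<bar>\<Sum>j. heat_kernel_f c (int (Suc j)) (t - s) * g (int (Suc j)) s\<bar> powr p)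
                 * indicator {0<..<t} s \<partial>lborel) * indicator {0<..<T} t \<partial>lborel)
         \<le> ennreal C * (\<integral>\<^sup>+ s. (\<Sum>j. ennreal ((2::real) powi (- 2 * int (Suc j)) * \<bar>g (int (Suc j)) s\<bar> powr p))
                 * indicator {0<..<T} s \<partial>lborel)
        \<and>
        (\<integral>\<^sup>+ t. (\<integral>\<^sup>+ s. ennreal (\<bar>\<Sum>\<^sub>\<infinity>j\<in>(UNIV::int set). heat_kernel_f c j (t - s) * g j s\<bar> powr p)
                 * indicator {0<..<t} s \<partial>lborel) * indicator {0<..<T} t \<partial>lborel)
         \<le> ennreal C * (\<integral>\<^sup>+ s. (\<Sum>\<^sub>\<infinity>j\<in>(UNIV::int set). ennreal ((2::real) powi (- 2 * j) * \<bar>g j s\<bar> powr p))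
                 * indicator {0<..<T} s \<partial>lborel)"
    if gm: "\<forall>j. set_borel_measurable lborel {0<..<T} (g j)" for g :: "int \<Rightarrow> real \<Rightarrow> real"
  proof
    show "(\<integral>\<^sup>+ t. (\<integral>\<^sup>+ s. ennreal (\<bar>\<Sum>\<^sub>\<infinity>j\<in>(UNIV::int set). heat_kernel_f c j (t - s) * g j s\<bar> powr p)
                 * indicator {0<..<t} s \<partial>lborel) * indicator {0<..<T} t \<partial>lborel)
         \<le> ennreal C * (\<integral>\<^sup>+ s. (\<Sum>\<^sub>\<infinity>j\<in>(UNIV::int set). ennreal ((2::real) powi (- 2 * j) * \<bar>g j s\<bar> powr p))
                 * indicator {0<..<T} s \<partial>lborel)"
    proof (rule MB[OF gm])
      show "\<forall>t s. 0 \<le> \<bar>\<Sum>\<^sub>\<infinity>j\<in>(UNIV::int set). heat_kernel_f c j (t - s) * g j s\<bar>" by simp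
      show "\<forall>t s. 0 < s \<longrightarrow> s < t \<longrightarrow> t < T \<longrightarrow>
        ennreal \<bar>\<Sum>\<^sub>\<infinity>j\<in>(UNIV::int set). heat_kernel_f c j (t - s) * g j s\<bar>
          \<le> (\<Sum>\<^sub>\<infinity>k. ennreal (heat_kernel_f c k (t - s) * \<bar>g k s\<bar>))"
      proof (intro allI impI)
        fix t s :: real
        have "ennreal \<bar>\<Sum>\<^sub>\<infinity>j\<in>(UNIV::int set). heat_kernel_f c j (t - s) * g j s\<bar>
              \<le> (\<Sum>\<^sub>\<infinity>k. ennreal \<bar>heat_kernel_f c k (t - s) * g k s\<bar>)"
          by (rule abs_infsum_le_ennreal)
        also have "\<dots> = (\<Sum>\<^sub>\<infinity>k. ennreal (heat_kernel_f c k (t - s) * \<bar>g k s\<bar>))"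
          by (simp add: abs_mult heat_nonneg)
        finally show "ennreal \<bar>\<Sum>\<^sub>\<infinity>j\<in>(UNIV::int set). heat_kernel_f c j (t - s) * g j s\<bar>
              \<le> (\<Sum>\<^sub>\<infinity>k. ennreal (heat_kernel_f c k (t - s) * \<bar>g k s\<bar>))" .
      qed
    qed
  next
    define g' where "g' = (\<lambda>j. if j \<ge> 1 then g j else (\<lambda>_. 0))"
    have gm': "\<forall>j. set_borel_measurable lborel {0<..<T} (g' j)"
      using gm by (auto simp: g'_def set_borel_measurable_def)
    have rhs: "(\<Sum>\<^sub>\<infinity>j\<in>(UNIV::int set). ennreal ((2::real) powi (- 2 * j) * \<bar>g' j s\<bar> powr p))
        = (\<Sum>j. ennreal ((2::real) powi (- 2 * int (Suc j)) * \<bar>g (int (Suc j)) s\<bar> powr p))" for s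
      by (subst ennreal_infsum_pos) (auto simp: g'_def)
    have "(\<integral>\<^sup>+ t. (\<integral>\<^sup>+ s. ennreal (\<bar>\<Sum>j. heat_kernel_f c (int (Suc j)) (t - s) * g (int (Suc j)) s\<bar> powr p)
                 * indicator {0<..<t} s \<partial>lborel) * indicator {0<..<T} t \<partial>lborel)
         \<le> ennreal C * (\<integral>\<^sup>+ s. (\<Sum>\<^sub>\<infinity>j\<in>(UNIV::int set). ennreal ((2::real) powi (- 2 * j) * \<bar>g' j s\<bar> powr p))
                 * indicator {0<..<T} s \<partial>lborel)"
    proof (rule MB[OF gm'])
      show "\<forall>t s. 0 \<le> \<bar>\<Sum>j. heat_kernel_f c (int (Suc j)) (t - s) * g (int (Suc j)) s\<bar>" by simp
      show "\<forall>t s. 0 < s \<longrightarrow> s < t \<longrightarrow> t < T \<longrightarrow>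
        ennreal \<bar>\<Sum>j. heat_kernel_f c (int (Suc j)) (t - s) * g (int (Suc j)) s\<bar>
          \<le> (\<Sum>\<^sub>\<infinity>k. ennreal (heat_kernel_f c k (t - s) * \<bar>g' k s\<bar>))"
      proof (intro allI impI)
        fix t s :: real
        have "ennreal \<bar>\<Sum>j. heat_kernel_f c (int (Suc j)) (t - s) * g (int (Suc j)) s\<bar>
              \<le> (\<Sum>j. ennreal \<bar>heat_kernel_f c (int (Suc j)) (t - s) * g (int (Suc j)) s\<bar>)"
          by (rule abs_suminf_le_ennreal)
        also have "\<dots> = (\<Sum>\<^sub>\<infinity>k. ennreal (heat_kernel_f c k (t - s) * \<bar>g' k s\<bar>))"
          by (subst ennreal_infsum_pos) (auto simp: g'_def abs_mult heat_nonneg)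
        finally show "ennreal \<bar>\<Sum>j. heat_kernel_f c (int (Suc j)) (t - s) * g (int (Suc j)) s\<bar>
              \<le> (\<Sum>\<^sub>\<infinity>k. ennreal (heat_kernel_f c k (t - s) * \<bar>g' k s\<bar>))" .
      qed
    qed
    thus "(\<integral>\<^sup>+ t. (\<integral>\<^sup>+ s. ennreal (\<bar>\<Sum>j. heat_kernel_f c (int (Suc j)) (t - s) * g (int (Suc j)) s\<bar> powr p)
                 * indicator {0<..<t} s \<partial>lborel) * indicator {0<..<T} t \<partial>lborel)
         \<le> ennreal C * (\<integral>\<^sup>+ s. (\<Sum>j. ennreal ((2::real) powi (- 2 * int (Suc j)) * \<bar>g (int (Suc j)) s\<bar> powr p))
                 * indicator {0<..<T} s \<partial>lborel)"
      by (simp only: rhs)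
  qed
  thus ?thesis using C0 by blast
qed
end
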